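(* Let $X$ be a bounded subset of $\mathbb R^n$. For every $\epsilon>0$ there exists $\delta>0$ such that for every continuous path $\alpha:[0,1]\to X$ with $\mathcal T(\alpha)<\delta$ we have $\operatorname{diam}(\operatorname{Im}(\alpha))\le\epsilon$.
   Context: Let $g:\mathbb R^n\to[-1,1]$ depend only on the first coordinate $x_1$: $g=-1$ if $x_1\le-3$, $\frac12(x_1+1)$ if $-3\le x_1\le-1$, $0$ if $-1\le x_1\le1$, $\frac12(x_1-1)$ if $1\le x_1\le3$, $1$ if $x_1\ge3$. For a pair $(P,Q)$ of distinct parallel hyperplanes let $g_{(P,Q)}=g\circ h_{(P,Q)}$ where $h_{(P,Q)}$ is a composition of a dilation, rotation and translation sending $P$ to $\{x_1=-3\}$ and $Q$ to $\{x_1=3\}$. For continuous $f:[a,b]\to\mathbb R^n$, $o(f,(P,Q))$ is the supremum of $-\sum_{i=1}^k g_{(P,Q)}(f(a_{i-1}))g_{(P,Q)}(f(a_i))$ over finite $a\le a_0\le\dots\le a_k\le b$ (empty sums $=0$). Fixing a countable dense set $\{(P_i,Q_i)\}$ in the separable metric space of pairs of parallel hyperplanes, the total oscillation is $\mathcal T(\alpha)=\sum_{i\ge1}2^{-i}\frac{o(\alpha,(P_i,Q_i))}{1+o(\alpha,(P_i,Q_i))}$. *)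

theory Defs
  imports "HOL-Analysis.Analysis"
begin

definition gfun :: "real \<Rightarrow> real" where
  "gfun y = (if y \<le> -3 then -1
             else if y \<le> -1 then (y + 1) / 2
             else if y \<le> 1 then 0
             else if y \<le> 3 then (y - 1) / 2
             else 1)"

text \<open>An ordered pair (P,Q) of distinct parallel hyperplanes is represented by a triple
  (u,s,t) with u a unit vector and s \<noteq> t:  P = {x. u \<bullet> x = s},  Q = {x. u \<bullet> x = t}.
  The triples (u,s,t) and (-u,-s,-t) represent the same pair.\<close>
definition hyp_pair :: "'a::euclidean_space \<times> real \<times> real \<Rightarrow> bool" where
  "hyp_pair p = (case p of (u, s, t) \<Rightarrow> norm u = 1 \<and> s \<noteq> t)"

text \<open>The first coordinate of h_(P,Q)(x): affine in u\<bullet>x, sending P to -3 and Q to 3.\<close>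
definition gpair :: "'a::euclidean_space \<times> real \<times> real \<Rightarrow> 'a \<Rightarrow> real" where
  "gpair p x = (case p of (u, s, t) \<Rightarrow> gfun (-3 + 6 * (u \<bullet> x - s) / (t - s)))"

definition osc :: "real \<Rightarrow> real \<Rightarrow> (real \<Rightarrow> 'a::euclidean_space) \<Rightarrow> 'a \<times> real \<times> real \<Rightarrow> real" where
  "osc a b f p = Sup {- (\<Sum>i=1..k. gpair p (f (c (i - 1))) * gpair p (f (c i))) | c k.
       a \<le> c 0 \<and> (\<forall>i<k. c i \<le> c (Suc i)) \<and> c k \<le> b}"

definition dense_pair_seq :: "(nat \<Rightarrow> 'a::euclidean_space \<times> real \<times> real) \<Rightarrow> bool" where
  "dense_pair_seq H \<longleftrightarrow> (\<forall>i. hyp_pair (H i)) \<and>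
     (\<forall>u s t e. hyp_pair (u, s, t) \<and> e > 0 \<longrightarrow>
        (\<exists>i. dist (H i) (u, s, t) < e \<or> dist (H i) (-u, -s, -t) < e))"

text \<open>Total oscillation of a path on [0,1]; H 0, H 1, ... is (P_1,Q_1), (P_2,Q_2), ...\<close>
definition total_osc :: "(nat \<Rightarrow> 'a::euclidean_space \<times> real \<times> real) \<Rightarrow> (real \<Rightarrow> 'a) \<Rightarrow> real" where
  "total_osc H \<alpha> = (\<Sum>i. (1/2) ^ (Suc i) * (osc 0 1 \<alpha> (H i) / (1 + osc 0 1 \<alpha> (H i))))"

end

theory Submission imports Defs begin

lemma gfun_eq: "gfun y = max (-1) (min 1 ((max y 1 + min y (-1)) * (1/2)))"
  unfolding gfun_def by (auto simp: max_def min_def)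

lemma gfun_cont_on[continuous_intros]: "continuous_on S f \<Longrightarrow> continuous_on S (\<lambda>x. gfun (f x))"
  by (simp only: gfun_eq) (intro continuous_intros)

lemma gfun_cont[continuous_intros]: "continuous F f \<Longrightarrow> continuous F (\<lambda>x. gfun (f x))"
  by (simp only: gfun_eq) (intro continuous_intros)

lemma gfun_bound: "\<bar>gfun y\<bar> \<le> 1"
  unfolding gfun_def by auto

lemma gfun_sign: assumes "\<bar>y - z\<bar> < 2" shows "0 \<le> gfun y * gfun z"
proof -
  have "(0 \<le> gfun y \<and> 0 \<le> gfun z) \<or> (gfun y \<le> 0 \<and> gfun z \<le> 0)"
    using assms unfolding gfun_def by auto
  then show ?thesis by (auto simp: zero_le_mult_iff)
qed

lemma gpair_alt: "gpair q x = gfun (-3 + 6 * (fst q \<bullet> x - fst (snd q)) / (snd (snd q) - fst (snd q)))"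
  by (cases q) (simp add: gpair_def)

lemma gpair_neg: "gpair (-q) x = gpair q x"
proof -
  obtain u s t where q: "q = (u, s, t)" by (cases q)
  have e: "6 * (-u \<bullet> x - - s) / (- t - - s) = 6 * (u \<bullet> x - s) / (t - s)"
  proof -
    have "6 * (-u \<bullet> x - - s) / (- t - - s) = (- (6 * (u \<bullet> x - s))) / (- (t - s))"
      by (simp add: inner_minus_left algebra_simps)
    also have "\<dots> = 6 * (u \<bullet> x - s) / (t - s)" by (rule minus_divide_divide)
    finally show ?thesis .
  qed
  show ?thesis using e by (simp add: q gpair_def del: inner_minus_left)
qed

lemma gpair_cont_at:
  assumes "snd (snd p) \<noteq> fst (snd p)"
  shows "continuous (at p) (\<lambda>q. gpair q x * gpair q y)"
  unfolding gpair_alt using assms by (intro continuous_intros) auto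

lemma gpair_cont_on:
  assumes "hyp_pair p" "continuous_on S f"
  shows "continuous_on S (\<lambda>z. gpair p (f z))"
  using assms unfolding gpair_alt hyp_pair_def by (cases p) (auto intro!: continuous_intros)


definition oscset :: "real \<Rightarrow> real \<Rightarrow> (real \<Rightarrow> 'a::euclidean_space) \<Rightarrow> 'a \<times> real \<times> real \<Rightarrow> real set" where
  "oscset a b f p = {- (\<Sum>i=1..k. gpair p (f (c (i - 1))) * gpair p (f (c i))) | c k.
       a \<le> c 0 \<and> (\<forall>i<k. c i \<le> c (Suc i)) \<and> c k \<le> b}"

lemma osc_alt: "osc a b f p = Sup (oscset a b f p)"
  by (simp add: osc_def oscset_def)

lemma mono_seg: "(\<forall>i<k. (c::nat\<Rightarrow>real) i \<le> c (Suc i)) \<Longrightarrow> i \<le> j \<Longrightarrow> j \<le> k \<Longrightarrow> c i \<le> c j"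
proof (induction j)
  case 0 then show ?case by simp
next
  case (Suc j)
  show ?case
  proof (cases "i = Suc j")
    case True then show ?thesis by simp
  next
    case False
    then have "i \<le> j" using Suc.prems by simp
    then have "c i \<le> c j" using Suc by simp
    moreover have "c j \<le> c (Suc j)" using Suc.prems by simp
    ultimately show ?thesis by linarith
  qed
qed

lemma telesc: "(\<Sum>i=1..k. (c::nat\<Rightarrow>real) i - c (i - 1)) = c k - c 0"
  by (induction k) auto

lemma osc_bdd:
  assumes "continuous_on {0..1} \<alpha>" "hyp_pair p"
  shows "bdd_above (oscset 0 1 \<alpha> p)"
proof -
  define \<phi> where "\<phi> t = -3 + 6 * (fst p \<bullet> \<alpha> t - fst (snd p)) / (snd (snd p) - fst (snd p))" for t
  have gp: "\<And>t. gpair p (\<alpha> t) = gfun (\<phi> t)" by (simp add: gpair_alt \<phi>_def)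
  have "continuous_on {0..1} \<phi>" unfolding \<phi>_def using assms
    by (cases p) (auto simp: hyp_pair_def intro!: continuous_intros)
  hence "uniformly_continuous_on {0..1} \<phi>" by (rule compact_uniformly_continuous) auto
  then obtain d where d: "d > 0" "\<forall>x\<in>{0..1}. \<forall>x'\<in>{0..1}. dist x' x < d \<longrightarrow> dist (\<phi> x') (\<phi> x) < 2"
    unfolding uniformly_continuous_on_def by (meson zero_less_numeral)
  have tm: "- (gfun (\<phi> s) * gfun (\<phi> t)) \<le> (t - s) / d"
    if "s \<in> {0..1}" "t \<in> {0..1}" "s \<le> t" for s t
  proof (cases "t - s < d")
    case True
    then have "dist t s < d" using that by (simp add: dist_real_def)
    then have "\<bar>\<phi> t - \<phi> s\<bar> < 2" using d that by (auto simp: dist_real_def)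
    then have "0 \<le> gfun (\<phi> s) * gfun (\<phi> t)" by (intro gfun_sign) auto
    moreover have "0 \<le> (t - s) / d" using that d by auto
    ultimately show ?thesis by linarith
  next
    case False
    then have "1 \<le> (t - s) / d" using d by (simp add: le_divide_eq)
    moreover have "\<bar>gfun (\<phi> s) * gfun (\<phi> t)\<bar> \<le> 1"
      unfolding abs_mult using gfun_bound by (intro mult_le_one) auto
    ultimately show ?thesis by linarith
  qed
  show ?thesis unfolding bdd_above_def
  proof (intro exI ballI)
    fix z assume "z \<in> oscset 0 1 \<alpha> p"
    then obtain c k where z: "z = - (\<Sum>i=1..k. gpair p (\<alpha> (c (i - 1))) * gpair p (\<alpha> (c i)))"
      and c: "0 \<le> c 0" "\<forall>i<k. c i \<le> c (Suc i)" "c k \<le> 1"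
      unfolding oscset_def by blast
    have rng: "c i \<in> {0..1}" if "i \<le> k" for i
      using mono_seg[OF c(2), of 0 i] mono_seg[OF c(2), of i k] c that by auto
    have "z = (\<Sum>i=1..k. - (gfun (\<phi> (c (i - 1))) * gfun (\<phi> (c i))))"
      unfolding z gp by (simp add: sum_negf)
    also have "\<dots> \<le> (\<Sum>i=1..k. (c i - c (i - 1)) / d)"
    proof (rule sum_mono)
      fix i assume i: "i \<in> {1..k}"
      show "- (gfun (\<phi> (c (i - 1))) * gfun (\<phi> (c i))) \<le> (c i - c (i - 1)) / d"
        using i by (intro tm rng mono_seg[OF c(2)]) auto
    qed
    also have "\<dots> = (c k - c 0) / d" by (simp only: sum_divide_distrib[symmetric] telesc)
    also have "\<dots> \<le> 1 / d" using c d by (simp add: divide_right_mono)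
    finally show "z \<le> 1 / d" .
  qed
qed

lemma osc_nonneg:
  assumes "continuous_on {0..1} \<alpha>" "hyp_pair p"
  shows "0 \<le> osc 0 1 \<alpha> p"
proof -
  have "0 \<in> oscset 0 1 \<alpha> p" unfolding oscset_def
    by (rule CollectI, rule exI[of _ "\<lambda>_. 0"], rule exI[of _ 0]) simp
  then show ?thesis unfolding osc_alt by (rule cSup_upper[OF _ osc_bdd[OF assms]])
qed

lemma osc_ge:
  assumes "continuous_on {0..1} \<alpha>" "hyp_pair p" "s \<in> {0..1}" "t \<in> {0..1}" "s \<le> t"
  shows "- (gpair p (\<alpha> s) * gpair p (\<alpha> t)) \<le> osc 0 1 \<alpha> p"
proof -
  have "- (gpair p (\<alpha> s) * gpair p (\<alpha> t)) \<in> oscset 0 1 \<alpha> p" unfolding oscset_def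
    by (rule CollectI, rule exI[of _ "\<lambda>i. if i = 0 then s else t"], rule exI[of _ 1]) (use assms in auto)
  then show ?thesis unfolding osc_alt by (rule cSup_upper[OF _ osc_bdd[OF assms(1,2)]])
qed

lemma total_ge:
  assumes "continuous_on {0..1} \<alpha>" "\<And>i. hyp_pair (H i)"
  shows "(1/2) ^ (Suc i) * (osc 0 1 \<alpha> (H i) / (1 + osc 0 1 \<alpha> (H i))) \<le> total_osc H \<alpha>"
proof -
  define f where "f n = (1/2::real) ^ (Suc n) * (osc 0 1 \<alpha> (H n) / (1 + osc 0 1 \<alpha> (H n)))" for n
  have nn: "0 \<le> osc 0 1 \<alpha> (H n)" for n using osc_nonneg assms by blast
  have f0: "0 \<le> f n" for n using nn[of n] by (simp add: f_def)
  have f1: "f n \<le> (1/2) ^ Suc n" for n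
  proof -
    have "osc 0 1 \<alpha> (H n) / (1 + osc 0 1 \<alpha> (H n)) \<le> 1" using nn[of n] by simp
    then show ?thesis unfolding f_def by (intro mult_left_le) auto
  qed
  have g: "summable (\<lambda>n. (1/2::real) ^ Suc n)"
    using summable_mult[OF summable_geometric[of "1/2::real"], of "1/2"] by simp
  have "summable f" by (rule summable_comparison_test'[OF g, of 0]) (use f0 f1 in auto)
  then have "sum f {i} \<le> suminf f" by (rule sum_le_suminf) (use f0 in auto)
  moreover have "total_osc H \<alpha> = suminf f" unfolding total_osc_def f_def by (rule refl)
  ultimately have "f i \<le> total_osc H \<alpha>" by simp
  then show ?thesis by (simp only: f_def)
qed


lemma cover_pt:
  fixes x y :: "'a::euclidean_space" and H :: "nat \<Rightarrow> 'a \<times> real \<times> real"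
  assumes "dense_pair_seq H" "x \<noteq> y"
  shows "\<exists>i. gpair (H i) x * gpair (H i) y < -1/2"
proof -
  define n where "n = norm (y - x)"
  have n: "n > 0" using assms(2) by (simp add: n_def)
  define u where "u = (1/n) *\<^sub>R (y - x)"
  have nu: "norm u = 1" using n by (simp add: u_def n_def)
  have uyx: "u \<bullet> y - u \<bullet> x = n"
  proof -
    have "u \<bullet> y - u \<bullet> x = (1/n) * ((y - x) \<bullet> (y - x))" by (simp add: u_def inner_diff_right diff_divide_distrib)
    also have "\<dots> = (1/n) * n^2" by (simp add: n_def power2_norm_eq_inner)
    also have "\<dots> = n" using n by (simp add: power2_eq_square)
    finally show ?thesis .
  qed
  define p where "p = (u, u \<bullet> x, u \<bullet> y)"
  have hp: "snd (snd p) \<noteq> fst (snd p)" using uyx n by (simp add: p_def)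
  have gx: "gpair p x = -1" by (simp add: p_def gpair_def gfun_def)
  have e3: "-3 + 6 * (u \<bullet> y - u \<bullet> x) / (u \<bullet> y - u \<bullet> x) = 3" using uyx n by simp
  have "gpair p y = gfun 3" by (simp only: p_def gpair_def prod.case e3)
  then have gy: "gpair p y = 1" by (simp add: gfun_def)
  have hyp: "hyp_pair p" using nu hp by (simp add: p_def hyp_pair_def)
  obtain e where e: "e > 0" "\<forall>q. dist q p < e \<longrightarrow> dist (gpair q x * gpair q y) (gpair p x * gpair p y) < 1/2"
    using gpair_cont_at[OF hp, of x y] unfolding continuous_at_eps_delta
    by (meson zero_less_divide_1_iff zero_less_numeral)
  have close: "gpair q x * gpair q y < -1/2" if "dist q p < e" for q
  proof -
    have "dist (gpair q x * gpair q y) (gpair p x * gpair p y) < 1/2"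
      by (rule e(2)[rule_format, OF that])
    then have "\<bar>gpair q x * gpair q y + 1\<bar> < 1/2" by (simp add: dist_real_def gx gy)
    then show ?thesis by linarith
  qed
  obtain i where "dist (H i) p < e \<or> dist (H i) (-u, -(u \<bullet> x), -(u \<bullet> y)) < e"
    using assms(1) hyp e(1) unfolding dense_pair_seq_def p_def by blast
  then show ?thesis
  proof
    assume "dist (H i) p < e" then show ?thesis using close by blast
  next
    assume a: "dist (H i) (-u, -(u \<bullet> x), -(u \<bullet> y)) < e"
    have "dist (- H i) p = dist (- H i) (- (- p))" by simp
    also have "\<dots> = dist (H i) (- p)" by (rule dist_minus)
    also have "- p = (-u, -(u \<bullet> x), -(u \<bullet> y))" by (simp add: p_def)
    finally have "dist (- H i) p = dist (H i) (-u, -(u \<bullet> x), -(u \<bullet> y))" .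
    then have "gpair (- H i) x * gpair (- H i) y < -1/2" using a close by simp
    then show ?thesis unfolding gpair_neg by blast
  qed
qed

theorem lemma3p15:
  fixes X :: "'a::euclidean_space set"
    and H :: "nat \<Rightarrow> 'a \<times> real \<times> real"
  assumes "bounded X"
    and "dense_pair_seq H"
  shows "\<forall>\<epsilon>>0. \<exists>\<delta>>0. \<forall>\<alpha>. continuous_on {0..1} \<alpha> \<and> \<alpha> ` {0..1} \<subseteq> X
             \<and> total_osc H \<alpha> < \<delta> \<longrightarrow> diameter (\<alpha> ` {0..1}) \<le> \<epsilon>"
proof (intro allI impI)
  fix \<epsilon> :: real assume \<epsilon>: "\<epsilon> > 0"
  have hH: "\<And>i. hyp_pair (H i)" using assms(2) by (simp add: dense_pair_seq_def)
  obtain R x0 where R: "X \<subseteq> cball x0 R" using assms(1) bounded_subset_cball by blast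
  define C where "C = (cball x0 R \<times> cball x0 R) \<inter> {z. \<epsilon> \<le> dist (fst z) (snd z)}"
  define V where "V i = {z. gpair (H i) (fst z) * gpair (H i) (snd z) < -1/2}" for i
  have "compact C" unfolding C_def
    by (intro compact_Int_closed compact_Times compact_cball closed_Collect_le continuous_intros)
  moreover have "open (V i)" for i unfolding V_def
    by (intro open_Collect_less continuous_intros continuous_on_mult gpair_cont_on hH)
  moreover have "C \<subseteq> (\<Union>i\<in>UNIV. V i)"
  proof
    fix z assume z: "z \<in> C"
    then have "fst z \<noteq> snd z" using \<epsilon> by (auto simp: C_def)
    then obtain i where "gpair (H i) (fst z) * gpair (H i) (snd z) < -1/2"
      using cover_pt[OF assms(2)] by blast
    then show "z \<in> (\<Union>i\<in>UNIV. V i)" by (auto simp: V_def)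
  qed
  ultimately obtain F where F: "finite F" "C \<subseteq> (\<Union>i\<in>F. V i)"
    by (meson compactE_image)
  obtain N where N: "\<forall>i\<in>F. i \<le> N" using F(1) finite_nat_set_iff_bounded_le by blast
  define \<delta> where "\<delta> = (1/2::real) ^ Suc N / 3"
  show "\<exists>\<delta>>0. \<forall>\<alpha>. continuous_on {0..1} \<alpha> \<and> \<alpha> ` {0..1} \<subseteq> X
             \<and> total_osc H \<alpha> < \<delta> \<longrightarrow> diameter (\<alpha> ` {0..1}) \<le> \<epsilon>"
  proof (intro exI conjI allI impI)
    show "\<delta> > 0" by (simp add: \<delta>_def)
    fix \<alpha> :: "real \<Rightarrow> 'a"
    assume A: "continuous_on {0..1} \<alpha> \<and> \<alpha> ` {0..1} \<subseteq> X \<and> total_osc H \<alpha> < \<delta>"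
    have "compact (\<alpha> ` {0..1})" using A by (intro compact_continuous_image) auto
    moreover have "\<alpha> ` {0..1} \<noteq> {}" by auto
    ultimately obtain a b where ab: "a \<in> \<alpha> ` {0..1}" "b \<in> \<alpha> ` {0..1}" "dist a b = diameter (\<alpha> ` {0..1})"
      using diameter_compact_attained by blast
    show "diameter (\<alpha> ` {0..1}) \<le> \<epsilon>"
    proof (rule ccontr)
      assume nt: "\<not> ?thesis"
      have sub: "\<alpha> ` {0..1} \<subseteq> cball x0 R" using A R by (meson subset_trans)
      have "a \<in> cball x0 R" "b \<in> cball x0 R" using subsetD[OF sub ab(1)] subsetD[OF sub ab(2)] by auto
      then have "(a, b) \<in> C" using ab(3) nt unfolding C_def by auto
      then obtain i where i: "i \<in> F" "(a, b) \<in> V i" using F by blast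
      obtain s t where st: "s \<in> {0..1}" "t \<in> {0..1}" "a = \<alpha> s" "b = \<alpha> t" using ab by auto
      have pr: "gpair (H i) (\<alpha> s) * gpair (H i) (\<alpha> t) < -1/2" using i st by (simp add: V_def)
      have cA: "continuous_on {0..1} \<alpha>" using A by blast
      have o: "1/2 \<le> osc 0 1 \<alpha> (H i)"
      proof (cases "s \<le> t")
        case True
        have "- (gpair (H i) (\<alpha> s) * gpair (H i) (\<alpha> t)) \<le> osc 0 1 \<alpha> (H i)"
          by (rule osc_ge[OF cA hH[of i] st(1,2) True])
        then show ?thesis using pr by linarith
      next
        case False
        then have "t \<le> s" by linarith
        have "- (gpair (H i) (\<alpha> t) * gpair (H i) (\<alpha> s)) \<le> osc 0 1 \<alpha> (H i)"
          by (rule osc_ge[OF cA hH[of i] st(2,1) \<open>t \<le> s\<close>])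
        moreover have "gpair (H i) (\<alpha> t) * gpair (H i) (\<alpha> s) = gpair (H i) (\<alpha> s) * gpair (H i) (\<alpha> t)"
          by (rule mult.commute)
        ultimately show ?thesis using pr by linarith
      qed
      have th: "1/3 \<le> osc 0 1 \<alpha> (H i) / (1 + osc 0 1 \<alpha> (H i))"
        using o by (simp add: le_divide_eq)
      have pw: "(1/2::real) ^ Suc N \<le> (1/2) ^ Suc i"
        using N i(1) by (intro power_decreasing) auto
      have "(1/2::real) ^ Suc N * (1/3) \<le> (1/2) ^ Suc i * (osc 0 1 \<alpha> (H i) / (1 + osc 0 1 \<alpha> (H i)))"
        by (rule mult_mono[OF pw th]) auto
      then have "\<delta> \<le> (1/2) ^ Suc i * (osc 0 1 \<alpha> (H i) / (1 + osc 0 1 \<alpha> (H i)))"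
        unfolding \<delta>_def by simp
      also have "\<dots> \<le> total_osc H \<alpha>" using total_ge A hH by blast
      finally show False using A by simp
    qed
  qed
qed

end
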